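(* Let $K=\mathrm{SU}(2)$ and $\mathcal{M}=\{(g_1,h_1,g_2,h_2)\in K^4:[g_1,h_1][g_2,h_2]=I\}/K$. There is a one-to-one correspondence between the subsets $$\{(g,h,h,g)\in K^4 : [g,h]\neq\pm I\}/K$$ and $$\{(g,h,khk^{-1},kgk^{-1})\in K^4 : [g,h]=k^{-1}[g,h]k,\ [g,h]\neq\pm I,\ k^2=-I\}/K$$ of $\mathcal{M}$.
   Context: $[a,b]=aba^{-1}b^{-1}$; $K$ acts on quadruples by simultaneous conjugation and $\mathcal{M}$ is the quotient. Both displayed sets consist of quadruples satisfying $[g_1,h_1][g_2,h_2]=I$, and their images in $\mathcal{M}$ are meant. *)

theory Defs
  imports "HOL-Analysis.Analysis"
begin

type_synonym mat2 = "complex^2^2"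
type_synonym quad = "mat2 \<times> mat2 \<times> mat2 \<times> mat2"

definition adj2 :: "mat2 \<Rightarrow> mat2" where
  "adj2 A = (\<chi> i j. cnj (A $ j $ i))"

definition SU2 :: "mat2 set" where
  "SU2 = {A. adj2 A ** A = mat 1 \<and> A ** adj2 A = mat 1 \<and> det A = 1}"

definition comm :: "mat2 \<Rightarrow> mat2 \<Rightarrow> mat2" where
  "comm a b = a ** b ** matrix_inv a ** matrix_inv b"

definition conjq :: "mat2 \<Rightarrow> quad \<Rightarrow> quad" where
  "conjq k q = (case q of (g1, h1, g2, h2) \<Rightarrow>
     (k ** g1 ** matrix_inv k, k ** h1 ** matrix_inv k,
      k ** g2 ** matrix_inv k, k ** h2 ** matrix_inv k))"

text \<open>The K-orbit of a quadruple under simultaneous conjugation (a point of the quotient).\<close>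
definition orbitK :: "quad \<Rightarrow> quad set" where
  "orbitK q = (\<lambda>k. conjq k q) ` SU2"

definition RepsK :: "quad set" where
  "RepsK = {(g1, h1, g2, h2). g1 \<in> SU2 \<and> h1 \<in> SU2 \<and> g2 \<in> SU2 \<and> h2 \<in> SU2 \<and>
                   comm g1 h1 ** comm g2 h2 = mat 1}"

definition ModM :: "quad set set" where
  "ModM = orbitK ` RepsK"

end

theory Submission
  imports Defs
begin

definition mk :: "complex \<Rightarrow> complex \<Rightarrow> mat2" where
  "mk a b = (\<chi> i j. if i = 1 then (if j = 1 then a else - cnj b) else (if j = 1 then b else cnj a))"

lemma one_ne_two2: "(1::2) \<noteq> 2" by simp

lemma mk_nth[simp]: "mk a b $ 1 $ 1 = a" "mk a b $ 1 $ 2 = - cnj b" "mk a b $ 2 $ 1 = b" "mk a b $ 2 $ 2 = cnj a"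
  by (simp_all add: mk_def)

lemma mat2_eq: "(A::mat2) = B \<longleftrightarrow> A$1$1 = B$1$1 \<and> A$1$2 = B$1$2 \<and> A$2$1 = B$2$1 \<and> A$2$2 = B$2$2"
  by (auto simp: vec_eq_iff forall_2)

lemma mult_nth: "((A::mat2) ** B) $ i $ j = A$i$1 * B$1$j + A$i$2 * B$2$j"
  by (simp add: matrix_matrix_mult_def sum_2)

lemma mat1_nth: "(mat 1 :: mat2) $ 1 $ 1 = 1" "(mat 1 :: mat2) $ 1 $ 2 = 0" "(mat 1 :: mat2) $ 2 $ 1 = 0" "(mat 1 :: mat2) $ 2 $ 2 = 1"
  by (simp_all add: mat_def)

lemma mat1_mk: "(mat 1 :: mat2) = mk 1 0" by (simp add: mat2_eq mat1_nth)
lemma nmat1_mk: "(- mat 1 :: mat2) = mk (-1) 0" by (simp add: mat2_eq mat1_nth)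

lemma mk_mult: "mk a b ** mk c d = mk (a*c - cnj b * d) (b*c + cnj a * d)"
  by (simp add: mat2_eq mult_nth algebra_simps)

lemma adj_mk: "adj2 (mk a b) = mk (cnj a) (-b)"
  by (simp add: mat2_eq adj2_def)

lemma mk_eq: "mk a b = mk c d \<longleftrightarrow> a = c \<and> b = d"
  by (auto simp: mat2_eq)

lemma SU2_mk: "A \<in> SU2 \<longleftrightarrow> (\<exists>a b. A = mk a b \<and> a * cnj a + b * cnj b = 1)"
proof
  assume "A \<in> SU2"
  then have u: "A ** adj2 A = mat 1" and d: "det A = 1" by (auto simp: SU2_def)
  from u have e: "A$1$1 * cnj (A$1$1) + A$1$2 * cnj (A$1$2) = 1"
     "A$1$1 * cnj (A$2$1) + A$1$2 * cnj (A$2$2) = 0"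
     "A$2$1 * cnj (A$2$1) + A$2$2 * cnj (A$2$2) = 1"
    by (auto simp: mat2_eq mult_nth adj2_def mat1_nth)
  from d have dd: "A$1$1 * A$2$2 - A$1$2 * A$2$1 = 1" by (simp add: det_2)
  have "A$2$2 = cnj (A$1$1) \<and> A$1$2 = - cnj (A$2$1)"
  proof -
    define x where "x = A$1$1" define y where "y = A$1$2"
    define z where "z = A$2$1" define w where "w = A$2$2"
    have h: "x * cnj x + y * cnj y = 1" "x * cnj z + y * cnj w = 0" "z * cnj z + w*cnj w = 1" "x*w - y*z = 1"
      using e dd by (auto simp: x_def y_def z_def w_def)
    have c2: "cnj x * z + cnj y * w = 0" using arg_cong[OF h(2), of cnj] by simp
    have "w = cnj x" using h c2 by algebra
    moreover have "y = - cnj z" using h c2 by algebra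
    ultimately show ?thesis by (simp add: x_def y_def z_def w_def)
  qed
  then have "A = mk (A$1$1) (A$2$1)" unfolding mat2_eq by simp
  moreover have "A$1$1 * cnj (A$1$1) + A$2$1 * cnj (A$2$1) = 1"
    using e(1) \<open>A$2$2 = cnj (A$1$1) \<and> A$1$2 = - cnj (A$2$1)\<close> by (simp add: mult.commute)
  ultimately show "\<exists>a b. A = mk a b \<and> a * cnj a + b * cnj b = 1" by blast
next
  assume "\<exists>a b. A = mk a b \<and> a * cnj a + b * cnj b = 1"
  then obtain a b where "A = mk a b" "a * cnj a + b * cnj b = 1" by blast
  then show "A \<in> SU2"
    by (simp add: SU2_def adj_mk mk_mult mat1_mk det_2 mk_eq algebra_simps)
qed

lemma real_par:
  fixes p q r t u s t' u' s' :: real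
  assumes w: "p^2+q^2+r^2 \<noteq> 0"
    and e1: "u*p = q*t" "s*p = r*t" "u*r = s*q" "t^2+u^2+s^2 = 1"
    and e2: "u'*p = q*t'" "s'*p = r*t'" "u'*r = s'*q" "t'^2+u'^2+s'^2 = 1"
  shows "(t' = t \<and> u' = u \<and> s' = s) \<or> (t' = -t \<and> u' = -u \<and> s' = -s)"
proof -
  define n where "n = p^2+q^2+r^2"
  define S where "S = t*p+u*q+s*r"
  define S' where "S' = t'*p+u'*q+s'*r"
  have n0: "n \<noteq> 0" using w n_def by simp
  have a1: "n*t = S*p" "n*u = S*q" "n * s = S*r" using e1 unfolding n_def S_def by algebra+
  have a2: "n*t' = S'*p" "n*u' = S'*q" "n * s' = S'*r" using e2 unfolding n_def S'_def by algebra+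
  have "n*n*(t^2+u^2+s^2) = S*S*n" using a1 unfolding n_def by algebra
  then have sq1: "S*S = n" using e1(4) n0 by (simp add: mult.commute)
  have "n*n*(t'^2+u'^2+s'^2) = S'*S'*n" using a2 unfolding n_def by algebra
  then have sq2: "S'*S' = n" using e2(4) n0 by (simp add: mult.commute)
  have "(S' - S)*(S' + S) = S'*S' - S*S" by (simp add: algebra_simps)
  then have "(S' - S)*(S' + S) = 0" using sq1 sq2 by simp
  then have "S' - S = 0 \<or> S' + S = 0" by simp
  then have "S' = S \<or> S' = -S" by linarith
  then show ?thesis
  proof
    assume "S' = S"
    then have "n*t' = n*t" "n*u' = n*u" "n * s' = n * s" using a1 a2 by auto
    then show ?thesis using n0 by auto
  next
    assume "S' = -S"
    then have "n*t' = n*(-t)" "n*u' = n*(-u)" "n * s' = n*(-s)" using a1 a2 by auto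
    then have "t' = -t" "u' = -u" "s' = -s" using n0 mult_left_cancel by blast+
    then show ?thesis by blast
  qed
qed


lemma neg_mk: "- mk x y = mk (-x) (-y)" by (simp add: mat2_eq)

lemma k_props:
  assumes n: "x*cnj x + y*cnj y = 1" and kk: "mk x y ** mk x y = - mat 1"
    and cm: "mk x y ** mk a b = mk a b ** mk x y"
  shows "Re x = 0" "Re y * Im a = Re b * Im x" "Im y * Im a = Im b * Im x"
        "Re y * Im b = Im y * Re b" "Im x ^ 2 + Re y ^ 2 + Im y ^ 2 = 1"
proof -
  have k1: "x*x - cnj y * y = -1" using kk by (simp add: mk_mult nmat1_mk mk_eq)
  have c1: "x*a - cnj y * b = a*x - cnj b * y" "y*a + cnj x * b = b*x + cnj a * y"
    using cm by (simp_all add: mk_mult mk_eq)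
  have nr: "Re x ^ 2 + Im x ^ 2 + Re y ^ 2 + Im y ^ 2 = 1"
    using arg_cong[OF n, of Re] by (simp add: power2_eq_square)
  have "Re x ^2 - Im x ^ 2 - Re y ^ 2 - Im y ^ 2 = -1"
    using arg_cong[OF k1, of Re] by (simp add: power2_eq_square)
  then have "Re x ^ 2 = 0" using nr by linarith
  then show rx: "Re x = 0" by simp
  show "Im x ^ 2 + Re y ^ 2 + Im y ^ 2 = 1" using nr rx by simp
  show "Re y * Im b = Im y * Re b" using arg_cong[OF c1(1), of Im] by (simp add: algebra_simps)
  show "Re y * Im a = Re b * Im x" using arg_cong[OF c1(2), of Im] rx by (simp add: algebra_simps)
  show "Im y * Im a = Im b * Im x" using arg_cong[OF c1(2), of Re] rx by (simp add: algebra_simps)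
qed

lemma w_nz:
  assumes n: "a*cnj a + b*cnj b = 1" and "mk a b \<noteq> mat 1" "mk a b \<noteq> - mat 1"
  shows "Im a ^ 2 + Re b ^ 2 + Im b ^ 2 \<noteq> 0"
proof
  assume "Im a ^ 2 + Re b ^ 2 + Im b ^ 2 = 0"
  then have z: "Im a = 0" "Re b = 0" "Im b = 0" by (auto simp: add_nonneg_eq_0_iff)
  have nr: "Re a ^ 2 + Im a ^ 2 + Re b ^ 2 + Im b ^ 2 = 1"
    using arg_cong[OF n, of Re] by (simp add: power2_eq_square)
  then have "Re a ^ 2 = 1" using z by simp
  then have "Re a = 1 \<or> Re a = -1" by (simp add: power2_eq_1_iff)
  then have "a = 1 \<or> a = -1" using z by (auto simp: complex_eq_iff)
  moreover have "b = 0" using z by (simp add: complex_eq_iff)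
  ultimately show False using assms by (auto simp: mat1_mk neg_mk)
qed

lemma k_unique:
  assumes n: "a*cnj a + b*cnj b = 1" and ne: "mk a b \<noteq> mat 1" "mk a b \<noteq> - mat 1"
    and n1: "x*cnj x + y*cnj y = 1" and kk1: "mk x y ** mk x y = - mat 1"
    and cm1: "mk x y ** mk a b = mk a b ** mk x y"
    and n2: "x'*cnj x' + y'*cnj y' = 1" and kk2: "mk x' y' ** mk x' y' = - mat 1"
    and cm2: "mk x' y' ** mk a b = mk a b ** mk x' y'"
  shows "mk x' y' = mk x y \<or> mk x' y' = - mk x y"
proof -
  note p1 = k_props[OF n1 kk1 cm1] and p2 = k_props[OF n2 kk2 cm2]
  have "(Im x' = Im x \<and> Re y' = Re y \<and> Im y' = Im y) \<or> (Im x' = - Im x \<and> Re y' = - Re y \<and> Im y' = - Im y)"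
    by (rule real_par[OF w_nz[OF n ne]]) (use p1 p2 in auto)
  then show ?thesis using p1(1) p2(1)
    by (auto simp: neg_mk mk_eq complex_eq_iff)
qed


lemma k_exists:
  assumes n: "a*cnj a + b*cnj b = 1" and ne: "mk a b \<noteq> mat 1" "mk a b \<noteq> - mat 1"
  shows "\<exists>x y. x*cnj x + y*cnj y = 1 \<and> mk x y ** mk x y = - mat 1 \<and>
               mk x y ** mk a b = mk a b ** mk x y"
proof -
  define N where "N = Im a ^ 2 + Re b ^ 2 + Im b ^ 2"
  have N0: "N > 0" using w_nz[OF n ne] unfolding N_def
    by (metis add_nonneg_nonneg less_eq_real_def zero_le_power2)
  define r where "r = sqrt N"
  have r0: "r > 0" using N0 r_def by simp
  have rr: "r * r = N" using N0 r_def by simp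
  define p where "p = Im a / r"
  define q where "q = Re b / r"
  define z where "z = Im b / r"
  have ps: "p*p + q*q + z*z = 1"
  proof -
    have "p*p + q*q + z*z = N / (r*r)" unfolding p_def q_def z_def N_def
      by (simp add: add_divide_distrib power2_eq_square)
    then show ?thesis using rr N0 by simp
  qed
  have pr: "q * Im a = Re b * p" "z * Im a = Im b * p" "q * Im b = z * Re b"
    unfolding p_def q_def z_def by simp_all
  define x where "x = Complex 0 p"
  define y where "y = Complex q z"
  have e1: "x*cnj x + y*cnj y = 1"
    using ps unfolding x_def y_def complex_eq_iff
    by (simp add: algebra_simps)
  have e2: "x*x - cnj y * y = -1" "y*x + cnj x*y = 0"
    using ps unfolding x_def y_def complex_eq_iff
    by (simp_all add: algebra_simps)
  have e3: "x*a - cnj y * b = a*x - cnj b * y" "y*a + cnj x * b = b*x + cnj a * y"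
    using pr unfolding x_def y_def complex_eq_iff
    by (simp_all add: algebra_simps)
  show ?thesis
    by (rule exI[of _ x], rule exI[of _ y]) (simp add: e1 e2 e3 mk_mult nmat1_mk mk_eq)
qed


lemma neg_mult_l[simp]: "(- A :: mat2) ** B = - (A ** B)" by (simp add: matrix_matrix_mult_def vec_eq_iff sum_negf)
lemma neg_mult_r[simp]: "(A :: mat2) ** (- B) = - (A ** B)" by (simp add: matrix_matrix_mult_def vec_eq_iff sum_negf)

lemma su_adj: "A \<in> SU2 \<Longrightarrow> adj2 A ** A = mat 1 \<and> A ** adj2 A = mat 1" by (simp add: SU2_def)

lemma su_inv_eq: assumes "A \<in> SU2" shows "matrix_inv A = adj2 A"
proof -
  have ex: "\<exists>B. A ** B = mat 1 \<and> B ** A = mat 1" using su_adj[OF assms] by blast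
  define B where "B = matrix_inv A"
  have "A ** B = mat 1 \<and> B ** A = mat 1" unfolding B_def matrix_inv_def by (rule someI_ex[OF ex])
  then have "B = B ** (A ** adj2 A)" using su_adj[OF assms] by simp
  also have "\<dots> = adj2 A" using \<open>A ** B = mat 1 \<and> B ** A = mat 1\<close> by (simp add: matrix_mul_assoc)
  finally show ?thesis by (simp add: B_def)
qed

lemma mk_in_SU2: "a*cnj a + b*cnj b = 1 \<Longrightarrow> mk a b \<in> SU2"
  unfolding SU2_mk by (rule exI[of _ a], rule exI[of _ b]) simp

lemma su_mult[simp]: "A \<in> SU2 \<Longrightarrow> B \<in> SU2 \<Longrightarrow> A ** B \<in> SU2"
proof -
  assume "A \<in> SU2" "B \<in> SU2"
  then obtain a b c d where "A = mk a b" "a*cnj a + b*cnj b = 1" "B = mk c d" "c*cnj c + d*cnj d = 1"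
    unfolding SU2_mk by blast
  moreover have "(a*c - cnj b * d) * cnj (a*c - cnj b * d) + (b*c + cnj a * d) * cnj (b*c + cnj a * d) = 1"
    using \<open>a*cnj a + b*cnj b = 1\<close> \<open>c*cnj c + d*cnj d = 1\<close> by simp algebra
  ultimately show ?thesis using mk_in_SU2 by (simp add: mk_mult)
qed

lemma su_inv[simp]: "A \<in> SU2 \<Longrightarrow> matrix_inv A \<in> SU2"
proof -
  assume a: "A \<in> SU2"
  then obtain a b where "A = mk a b" "a*cnj a + b*cnj b = 1" unfolding SU2_mk by blast
  then show ?thesis using a by (simp add: su_inv_eq adj_mk mult.commute mk_in_SU2)
qed

lemma su_one[simp]: "mat 1 \<in> SU2"
proof -
  have "mk 1 0 = mk 1 0 \<and> 1*cnj 1 + 0*cnj 0 = (1::complex)" by simp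
  then show ?thesis unfolding mat1_mk by (intro mk_in_SU2) simp
qed
lemma su_neg[simp]: "A \<in> SU2 \<Longrightarrow> - A \<in> SU2"
proof -
  assume "A \<in> SU2"
  then obtain a b where "A = mk a b" "a*cnj a + b*cnj b = 1" unfolding SU2_mk by blast
  then have "- A = mk (-a) (-b) \<and> (-a)*cnj (-a) + (-b)*cnj (-b) = 1" by (simp add: neg_mk)
  then show ?thesis using mk_in_SU2 by simp
qed

lemma su_rinv[simp]: "A \<in> SU2 \<Longrightarrow> A ** matrix_inv A = mat 1" by (simp add: su_inv_eq su_adj)
lemma su_linv[simp]: "A \<in> SU2 \<Longrightarrow> matrix_inv A ** A = mat 1" by (simp add: su_inv_eq su_adj)
lemma su_rinv2[simp]: "A \<in> SU2 \<Longrightarrow> A ** (matrix_inv A ** X) = X"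
  by (simp add: matrix_mul_assoc)
lemma su_linv2[simp]: "A \<in> SU2 \<Longrightarrow> matrix_inv A ** (A ** X) = X"
  by (simp add: matrix_mul_assoc)

lemma su_inv_unique: "A \<in> SU2 \<Longrightarrow> A ** B = mat 1 \<Longrightarrow> matrix_inv A = B"
proof -
  assume a: "A \<in> SU2" "A ** B = mat 1"
  have "matrix_inv A = matrix_inv A ** (A ** B)" using a by simp
  also have "\<dots> = B" using a(1) by (rule su_linv2)
  finally show ?thesis .
qed

lemma su_inv_mult[simp]: "A \<in> SU2 \<Longrightarrow> B \<in> SU2 \<Longrightarrow> matrix_inv (A ** B) = matrix_inv B ** matrix_inv A"
  by (rule su_inv_unique) (simp_all flip: matrix_mul_assoc)

lemma su_inv_inv[simp]: "A \<in> SU2 \<Longrightarrow> matrix_inv (matrix_inv A) = A"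
  by (rule su_inv_unique) simp_all

lemma su_inv_neg[simp]: "A \<in> SU2 \<Longrightarrow> matrix_inv (- A) = - matrix_inv A"
  by (rule su_inv_unique) simp_all

lemma su_k_unique:
  assumes "c \<in> SU2" "c \<noteq> mat 1" "c \<noteq> - mat 1" "k \<in> SU2" "k' \<in> SU2"
    "k ** k = - mat 1" "k' ** k' = - mat 1" "k ** c = c ** k" "k' ** c = c ** k'"
  shows "k' = k \<or> k' = - k"
proof -
  obtain a b where c: "c = mk a b" "a*cnj a + b*cnj b = 1" using assms(1) unfolding SU2_mk by blast
  obtain x y where k: "k = mk x y" "x*cnj x + y*cnj y = 1" using assms(4) unfolding SU2_mk by blast
  obtain x' y' where k': "k' = mk x' y'" "x'*cnj x' + y'*cnj y' = 1" using assms(5) unfolding SU2_mk by blast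
  show ?thesis using k_unique[of a b x y x' y'] c k k' assms by simp
qed

lemma su_k_exists:
  assumes "c \<in> SU2" "c \<noteq> mat 1" "c \<noteq> - mat 1"
  shows "\<exists>k \<in> SU2. k ** k = - mat 1 \<and> k ** c = c ** k"
proof -
  obtain a b where c: "c = mk a b" "a*cnj a + b*cnj b = 1" using assms(1) unfolding SU2_mk by blast
  obtain x y where "x*cnj x + y*cnj y = 1 \<and> mk x y ** mk x y = - mat 1 \<and>
               mk x y ** mk a b = mk a b ** mk x y" using k_exists[of a b] c assms by auto
  then show ?thesis using c mk_in_SU2 by blast
qed


lemmas rassoc = matrix_mul_assoc[symmetric]

lemma tail: "(A::mat2) = B \<Longrightarrow> A ** X = B ** X" by simp

lemma comm_su[simp]: "g \<in> SU2 \<Longrightarrow> h \<in> SU2 \<Longrightarrow> comm g h \<in> SU2"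
  by (simp add: comm_def)

lemma comm_inv: "g \<in> SU2 \<Longrightarrow> h \<in> SU2 \<Longrightarrow> comm g h ** comm h g = mat 1"
  by (simp add: comm_def rassoc)

lemma comm_conj: "g \<in> SU2 \<Longrightarrow> h \<in> SU2 \<Longrightarrow> k \<in> SU2 \<Longrightarrow>
   comm (k ** g ** matrix_inv k) (k ** h ** matrix_inv k) = k ** comm g h ** matrix_inv k"
  by (simp add: comm_def rassoc)

lemma comm_cond: assumes "k \<in> SU2" "c \<in> SU2"
  shows "(c = matrix_inv k ** c ** k) \<longleftrightarrow> (k ** c = c ** k)"
proof
  assume "c = matrix_inv k ** c ** k"
  then have "k ** c = k ** (matrix_inv k ** c ** k)" by simp
  also have "\<dots> = c ** k" using assms by (simp add: rassoc)
  finally show "k ** c = c ** k" .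
next
  assume "k ** c = c ** k"
  then have "matrix_inv k ** (k ** c) = matrix_inv k ** (c ** k)" by simp
  then show "c = matrix_inv k ** c ** k" using assms by (simp add: rassoc)
qed

lemma inv_one[simp]: "matrix_inv (mat 1 :: mat2) = mat 1"
  by (rule su_inv_unique) simp_all

lemma conjq_one: "conjq (mat 1) q = q"
  by (cases q) (simp add: conjq_def)

lemma conjq_comp: "k \<in> SU2 \<Longrightarrow> m \<in> SU2 \<Longrightarrow> conjq k (conjq m q) = conjq (k ** m) q"
  by (cases q) (simp add: conjq_def rassoc)

lemma orbit_mem: "q \<in> orbitK q"
  unfolding orbitK_def using conjq_one[of q] su_one by (metis image_eqI)

lemma orbit_eq: assumes "m \<in> SU2" shows "orbitK (conjq m q) = orbitK q"
proof
  show "orbitK (conjq m q) \<subseteq> orbitK q"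
    unfolding orbitK_def using assms by (auto simp: conjq_comp)
  show "orbitK q \<subseteq> orbitK (conjq m q)"
  proof
    fix p assume "p \<in> orbitK q"
    then obtain k where k: "k \<in> SU2" "p = conjq k q" unfolding orbitK_def by blast
    have "p = conjq (k ** matrix_inv m) (conjq m q)" using k assms by (simp add: conjq_comp rassoc)
    then show "p \<in> orbitK (conjq m q)" unfolding orbitK_def using k assms by auto
  qed
qed

definition proj :: "quad \<Rightarrow> quad" where "proj q = (case q of (a,b,c,d) \<Rightarrow> (a,b,b,a))"

lemma proj_conjq: "proj (conjq k q) = conjq k (proj q)"
  by (cases q) (simp add: proj_def conjq_def)

lemma proj_orbit: "proj ` orbitK q = orbitK (proj q)"
  unfolding orbitK_def image_image proj_conjq ..

lemma core:
  assumes su: "g \<in> SU2" "h \<in> SU2" "k \<in> SU2" "k' \<in> SU2" "m \<in> SU2"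
    and ne: "comm g h \<noteq> mat 1" "comm g h \<noteq> - mat 1"
    and kk: "k ** k = - mat 1" "k' ** k' = - mat 1"
    and kc: "k ** comm g h = comm g h ** k"
    and kc': "k' ** comm (m ** g ** matrix_inv m) (m ** h ** matrix_inv m)
            = comm (m ** g ** matrix_inv m) (m ** h ** matrix_inv m) ** k'"
  shows "k' ** (m ** h ** matrix_inv m) ** matrix_inv k' = m ** (k ** h ** matrix_inv k) ** matrix_inv m
       \<and> k' ** (m ** g ** matrix_inv m) ** matrix_inv k' = m ** (k ** g ** matrix_inv k) ** matrix_inv m"
proof -
  define c where "c = comm g h"
  have csu: "c \<in> SU2" using su by (simp add: c_def)
  have hyp: "k' ** (m ** (c ** matrix_inv m)) = m ** (c ** (matrix_inv m ** k'))"
  proof -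
    have e: "comm (m ** g ** matrix_inv m) (m ** h ** matrix_inv m) = m ** c ** matrix_inv m"
      using comm_conj[of g h m] su by (simp add: c_def)
    show ?thesis using kc'[unfolded e] by (simp add: rassoc)
  qed
  define k2 where "k2 = matrix_inv m ** (k' ** m)"
  have k2su: "k2 \<in> SU2" using su by (simp add: k2_def)
  have kk': "k' ** (k' ** X) = - X" for X
    using tail[OF kk(2), of X] by (simp add: rassoc)
  have "k2 ** k2 = - mat 1" using su by (simp add: k2_def rassoc kk')
  moreover have "k2 ** c = c ** k2"
  proof -
    have "k2 ** c = matrix_inv m ** (k' ** (m ** (c ** (matrix_inv m ** m))))"
      using su by (simp add: k2_def rassoc)
    also have "\<dots> = matrix_inv m ** (m ** (c ** (matrix_inv m ** (k' ** m))))"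
      using tail[OF hyp, of m] su by (simp add: rassoc)
    also have "\<dots> = c ** k2" using su by (simp add: k2_def rassoc)
    finally show ?thesis .
  qed
  ultimately have "k2 = k \<or> k2 = - k"
    using su_k_unique[of c k k2] csu su k2su ne kk kc by (simp add: c_def)
  moreover have "k' = m ** (k2 ** matrix_inv m)" using su by (simp add: k2_def rassoc)
  ultimately have "k' = m ** (k ** matrix_inv m) \<or> k' = - (m ** (k ** matrix_inv m))" by auto
  then show ?thesis using su by (auto simp: rassoc)
qed


lemma B_cond:
  assumes su: "g \<in> SU2" "h \<in> SU2" "k \<in> SU2" and kc: "k ** comm g h = comm g h ** k"
  shows "comm g h ** comm (k ** h ** matrix_inv k) (k ** g ** matrix_inv k) = mat 1"
proof -
  define c where "c = comm g h"
  define d where "d = comm h g"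
  have cd: "c ** d = mat 1" using comm_inv su by (simp add: c_def d_def)
  have e: "comm (k ** h ** matrix_inv k) (k ** g ** matrix_inv k) = k ** d ** matrix_inv k"
    using comm_conj[of h g k] su by (simp add: d_def)
  have "c ** (k ** (d ** matrix_inv k)) = k ** (c ** (d ** matrix_inv k))"
    using tail[OF kc[symmetric], of "d ** matrix_inv k"] by (simp add: rassoc c_def)
  also have "\<dots> = mat 1" using tail[OF cd, of "matrix_inv k"] su by (simp add: rassoc)
  finally show ?thesis unfolding e c_def[symmetric] by (simp add: rassoc)
qed

theorem mainTheorem11:
  defines "A \<equiv> {(g, h, h, g) | g h. g \<in> SU2 \<and> h \<in> SU2 \<and>
                   comm g h ** comm h g = mat 1 \<and>
                   comm g h \<noteq> mat 1 \<and> comm g h \<noteq> - mat 1}"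
      and "B \<equiv> {(g, h, k ** h ** matrix_inv k, k ** g ** matrix_inv k) | g h k.
                   g \<in> SU2 \<and> h \<in> SU2 \<and> k \<in> SU2 \<and>
                   comm g h ** comm (k ** h ** matrix_inv k) (k ** g ** matrix_inv k) = mat 1 \<and>
                   comm g h = matrix_inv k ** comm g h ** k \<and>
                   comm g h \<noteq> mat 1 \<and> comm g h \<noteq> - mat 1 \<and>
                   k ** k = - mat 1}"
  shows "orbitK ` A \<subseteq> ModM \<and> orbitK ` B \<subseteq> ModM \<and>
         (\<exists>f. bij_betw f (orbitK ` A) (orbitK ` B))"
proof -
  have AR: "A \<subseteq> RepsK" unfolding A_def RepsK_def by auto
  have BR: "B \<subseteq> RepsK" unfolding B_def RepsK_def by auto
  have PB: "proj ` B = A"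
  proof
    show "proj ` B \<subseteq> A"
      unfolding B_def A_def by (auto simp: proj_def comm_inv)
    show "A \<subseteq> proj ` B"
    proof
      fix q assume "q \<in> A"
      then obtain g h where q: "q = (g,h,h,g)" "g \<in> SU2" "h \<in> SU2"
        "comm g h \<noteq> mat 1" "comm g h \<noteq> - mat 1" unfolding A_def by blast
      obtain k where k: "k \<in> SU2" "k ** k = - mat 1" "k ** comm g h = comm g h ** k"
        using su_k_exists[of "comm g h"] q by auto
      have "(g, h, k ** h ** matrix_inv k, k ** g ** matrix_inv k) \<in> B"
        unfolding B_def using q k B_cond[of g h k] comm_cond[of k "comm g h"] by auto
      moreover have "q = proj (g, h, k ** h ** matrix_inv k, k ** g ** matrix_inv k)"
        using q by (simp add: proj_def)
      ultimately show "q \<in> proj ` B" by blast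
    qed
  qed
  define F where "F = (\<lambda>S. proj ` S)"
  have img: "F ` orbitK ` B = orbitK ` A"
    unfolding F_def image_image proj_orbit PB[symmetric] by (simp add: image_image)
  have inj: "inj_on F (orbitK ` B)"
  proof (rule inj_onI)
    fix S1 S2 assume S: "S1 \<in> orbitK ` B" "S2 \<in> orbitK ` B" "F S1 = F S2"
    then obtain q1 q2 where qq: "q1 \<in> B" "q2 \<in> B" "S1 = orbitK q1" "S2 = orbitK q2" by blast
    then obtain g h k where q1: "q1 = (g, h, k ** h ** matrix_inv k, k ** g ** matrix_inv k)"
      "g \<in> SU2" "h \<in> SU2" "k \<in> SU2" "comm g h = matrix_inv k ** comm g h ** k"
      "comm g h \<noteq> mat 1" "comm g h \<noteq> - mat 1" "k ** k = - mat 1"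
      unfolding B_def by blast
    obtain g' h' k' where q2: "q2 = (g', h', k' ** h' ** matrix_inv k', k' ** g' ** matrix_inv k')"
      "g' \<in> SU2" "h' \<in> SU2" "k' \<in> SU2" "comm g' h' = matrix_inv k' ** comm g' h' ** k'"
      "k' ** k' = - mat 1"
      using qq unfolding B_def by blast
    have "orbitK (proj q1) = orbitK (proj q2)" using S qq by (simp add: F_def proj_orbit)
    then have "proj q2 \<in> orbitK (proj q1)" using orbit_mem by metis
    then obtain m where m: "m \<in> SU2" "proj q2 = conjq m (proj q1)" unfolding orbitK_def by blast
    then have gh: "g' = m ** g ** matrix_inv m" "h' = m ** h ** matrix_inv m"
      using q1 q2 by (simp_all add: proj_def conjq_def)
    have kc: "k ** comm g h = comm g h ** k" using comm_cond[of k "comm g h"] q1 by simp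
    have kc': "k' ** comm g' h' = comm g' h' ** k'" using comm_cond[of k' "comm g' h'"] q2 by simp
    have "q2 = conjq m q1"
      using core[of g h k k' m] q1 q2 m kc kc'[unfolded gh] gh by (simp add: conjq_def)
    then show "S1 = S2" using qq orbit_eq[OF m(1)] by simp
  qed
  have "bij_betw F (orbitK ` B) (orbitK ` A)" unfolding bij_betw_def using inj img by blast
  then have "bij_betw (inv_into (orbitK ` B) F) (orbitK ` A) (orbitK ` B)" by (rule bij_betw_inv_into)
  moreover have "orbitK ` A \<subseteq> ModM" "orbitK ` B \<subseteq> ModM" using AR BR unfolding ModM_def by auto
  ultimately show ?thesis by blast
qed

end
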